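(* For every $g\in\mathscr T'$, the map $e^{a(g_x)}:L^2_x(\mathbb R^3,\mathcal F_{\rm fin}(\mathscr T))\to L^2_x(\mathbb R^3,\mathcal F_{\rm fin}(\mathscr T))$ is injective.
   Context: $\mathscr T=C_0^\infty(\mathbb R^3\setminus\{0\})$, $\mathfrak h=L^2(\mathbb R^3,dk)$, $\mathscr T'$ the continuous antilinear functionals on $\mathscr T$, $\langle\varphi,f\rangle:=\overline{\varphi(f)}$ (equal to $\langle\varphi,f\rangle_{L^2}$ for $\varphi\in L^2$). $\mathcal F(L^2_k)$ is the symmetric Fock space over $L^2(\mathbb R^3,dk)$ and $\mathcal F_{\rm fin}(\mathscr T)$ the vectors with finitely many nonzero components, the $n$-th in the algebraic symmetric tensor product of $n$ copies of $\mathscr T$. $\mathcal N_0=L^2(\mathbb R^3_x)\otimes\mathcal F(L^2_k)\cong L^2(\mathbb R^3_x;\mathcal F(L^2_k))$, and $L^2_x(\mathbb R^3,\mathcal F_{\rm fin}(\mathscr T))$ denotes the space of (classes of) square-integrable functions $x\mapsto\Psi(x)$ with $\Psi(x)\in\mathcal F_{\rm fin}(\mathscr T)$ for a.e. $x$ (with number of nonzero components bounded uniformly in $x$). For $g\in\mathscr T'$ and $x\in\mathbb R^3$, $g_x:=e^{2\pi ik\cdot x}g\in\mathscr T'$, i.e. $\langle g_x,f\rangle=\langle g,e^{-2\pi ik\cdot x}f\rangle$. The operator $a(g_x)$ acts pointwise in $x$: $(a(g_x)\Psi(x))_n=\frac{\sqrt{n+1}}{(n+1)!}\sum_{\sigma\in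 S_{n+1}}\langle g_x,\psi_{\sigma(1)}(x)\rangle\psi_{\sigma(2)}(x)\otimes\cdots\otimes\psi_{\sigma(n+1)}(x)$ for $\Psi_{n+1}(x)=\psi_1(x)\otimes_s\cdots\otimes_s\psi_{n+1}(x)$ with $\psi_j(x)\in\mathscr T$, extended linearly; $e^{a(g_x)}:=\sum_k a(g_x)^k/k!$, a finite sum. *)

theory Defs
  imports "HOL-Analysis.Analysis"
begin

definition pderiv3 :: "3 \<Rightarrow> (real^3 \<Rightarrow> complex) \<Rightarrow> real^3 \<Rightarrow> complex" where
  "pderiv3 i f x = vector_derivative (\<lambda>t::real. f (x + t *\<^sub>R axis i 1)) (at 0)"

fun piter :: "3 list \<Rightarrow> (real^3 \<Rightarrow> complex) \<Rightarrow> real^3 \<Rightarrow> complex" where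
  "piter [] f = f"
| "piter (i # is) f = pderiv3 i (piter is f)"

definition smooth3 :: "(real^3 \<Rightarrow> complex) \<Rightarrow> bool" where
  "smooth3 f \<longleftrightarrow> (\<forall>is. continuous_on UNIV (piter is f) \<and>
     (\<forall>i x. ((\<lambda>t::real. piter is f (x + t *\<^sub>R axis i 1)) has_vector_derivative piter (i # is) f x) (at 0)))"

definition tsupp :: "(real^3 \<Rightarrow> complex) \<Rightarrow> (real^3) set" where
  "tsupp f = closure {x. f x \<noteq> 0}"

definition T_space :: "(real^3 \<Rightarrow> complex) set" where
  "T_space = {f. smooth3 f \<and> compact (tsupp f) \<and> 0 \<notin> tsupp f}"

section \<open>T': continuous antilinear functionals on T (LF topology)\<close>

definition T_dual :: "((real^3 \<Rightarrow> complex) \<Rightarrow> complex) set" where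
  "T_dual = {\<phi>.
     (\<forall>f\<in>T_space. \<forall>h\<in>T_space. \<phi> (\<lambda>k. f k + h k) = \<phi> f + \<phi> h) \<and>
     (\<forall>c. \<forall>f\<in>T_space. \<phi> (\<lambda>k. c * f k) = cnj c * \<phi> f) \<and>
     (\<forall>K. compact K \<and> 0 \<notin> K \<longrightarrow>
        (\<exists>C N. \<forall>f\<in>T_space. tsupp f \<subseteq> K \<longrightarrow>
           (\<forall>M. (\<forall>is x. length is \<le> N \<longrightarrow> cmod (piter is f x) \<le> M) \<longrightarrow> cmod (\<phi> f) \<le> C * M)))}"

definition pairing :: "((real^3 \<Rightarrow> complex) \<Rightarrow> complex) \<Rightarrow> (real^3 \<Rightarrow> complex) \<Rightarrow> complex" where
  "pairing \<phi> f = cnj (\<phi> f)"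

text \<open>n-particle functions are functions on lists of momenta, vanishing off length n.
  psi_1 (x)_s ... (x)_s psi_n = (1/n!) sum_sigma psi_sigma(1) (x) ... (x) psi_sigma(n).\<close>
definition sym_prod :: "nat \<Rightarrow> (nat \<Rightarrow> real^3 \<Rightarrow> complex) \<Rightarrow> (real^3) list \<Rightarrow> complex" where
  "sym_prod n \<psi> ks = (if length ks = n then
      (\<Sum>\<sigma>\<in>{\<sigma>. \<sigma> permutes {..<n}}. \<Prod>i<n. \<psi> (\<sigma> i) (ks ! i)) / of_nat (fact n) else 0)"

definition symT :: "nat \<Rightarrow> ((real^3) list \<Rightarrow> complex) set" where
  "symT n = {F. \<exists>m (c :: nat \<Rightarrow> complex) (\<psi> :: nat \<Rightarrow> nat \<Rightarrow> real^3 \<Rightarrow> complex).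
      (\<forall>j<m. \<forall>i<n. \<psi> j i \<in> T_space) \<and> F = (\<lambda>ks. \<Sum>j<m. c j * sym_prod n (\<psi> j) ks)}"

type_synonym fock = "nat \<Rightarrow> (real^3) list \<Rightarrow> complex"

definition Ffin :: "fock set" where
  "Ffin = {\<Psi>. (\<forall>n. \<Psi> n \<in> symT n) \<and> finite {n. \<Psi> n \<noteq> (\<lambda>_. 0)}}"

text \<open>(a(g_x) Psi)_n(k_1..k_n) = sqrt(n+1) <g_x, Psi_{n+1}(., k_1..k_n)>,
  with <g_x, f> = <g, e^{-2 pi i k x} f>.\<close>
definition ann :: "((real^3 \<Rightarrow> complex) \<Rightarrow> complex) \<Rightarrow> real^3 \<Rightarrow> fock \<Rightarrow> fock" where
  "ann g x \<Psi> = (\<lambda>n ks. if length ks = n then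
      complex_of_real (sqrt (real (Suc n))) *
        pairing g (\<lambda>k0. cis (- 2 * pi * (k0 \<bullet> x)) * \<Psi> (Suc n) (k0 # ks))
    else 0)"

definition exp_ann :: "((real^3 \<Rightarrow> complex) \<Rightarrow> complex) \<Rightarrow> real^3 \<Rightarrow> fock \<Rightarrow> fock" where
  "exp_ann g x \<Psi> = (\<lambda>n ks. \<Sum>j. ((ann g x ^^ j) \<Psi>) n ks / of_nat (fact j))"

definition L2x_Ffin :: "(real^3 \<Rightarrow> fock) \<Rightarrow> bool" where
  "L2x_Ffin \<Psi> \<longleftrightarrow>
     (\<forall>n. (\<lambda>(x, k). \<Psi> x n (map k [0..<n])) \<in>
            borel_measurable (lborel \<Otimes>\<^sub>M PiM {..<n} (\<lambda>_. (lborel :: (real^3) measure)))) \<and>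
     (\<integral>\<^sup>+ x. (\<Sum>n. \<integral>\<^sup>+ k. (ennreal (cmod (\<Psi> x n (map k [0..<n])))) ^ 2
                     \<partial>PiM {..<n} (\<lambda>_. (lborel :: (real^3) measure))) \<partial>lborel) < \<infinity> \<and>
     (\<exists>N. AE x in lborel. \<Psi> x \<in> Ffin \<and> card {n. \<Psi> x n \<noteq> (\<lambda>_. 0)} \<le> N)"

end

theory Submission
  imports Defs
begin

lemma piter_zero: "piter is (\<lambda>_. 0) = (\<lambda>_. 0)"
  by (induction "is") (auto simp: pderiv3_def fun_eq_iff)

lemma pderiv3_zero: "pderiv3 i (\<lambda>_. 0) = (\<lambda>_. 0)"
  using piter_zero[of "[i]"] by simp

lemma tsupp_zero: "tsupp (\<lambda>_. 0) = {}"
  unfolding tsupp_def by simp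

lemma smooth3_zero: "smooth3 (\<lambda>_. 0)"
  unfolding smooth3_def piter_zero
  by (intro allI conjI continuous_on_const has_vector_derivative_const)

lemma zero_T: "(\<lambda>_. 0) \<in> T_space"
  unfolding T_space_def mem_Collect_eq tsupp_zero
  by (intro conjI smooth3_zero compact_empty) (simp only: empty_iff not_False_eq_True)

lemma ann_dep: assumes "A (Suc n) = B (Suc n)" shows "ann g x A n = ann g x B n"
  unfolding ann_def by (simp only: assms)

lemma g_zero: assumes "g \<in> T_dual" shows "g (\<lambda>_. 0) = 0"
proof -
  have "\<forall>c. \<forall>f\<in>T_space. g (\<lambda>k. c * f k) = cnj c * g f"
    using assms unfolding T_dual_def mem_Collect_eq by (elim conjE) assumption
  then have "\<forall>f\<in>T_space. g (\<lambda>k. 0 * f k) = cnj 0 * g f" by (rule spec)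
  from bspec[OF this zero_T] show ?thesis by simp
qed

lemma ann_zero: assumes "g \<in> T_dual" shows "ann g x (\<lambda>_ _. 0) = (\<lambda>_ _. 0)"
  using g_zero[OF assms] by (simp add: ann_def pairing_def fun_eq_iff)

lemma annpow_zero: assumes "g \<in> T_dual" shows "(ann g x ^^ j) (\<lambda>_ _. 0) = (\<lambda>_ _. 0)"
  by (induction j) (simp_all add: ann_zero[OF assms])

lemma annpow_dep: "P (n + j) = Q (n + j) \<Longrightarrow> (ann g x ^^ j) P n = (ann g x ^^ j) Q n"
proof (induction j arbitrary: n)
  case 0 then show ?case by simp
next
  case (Suc j)
  have "(ann g x ^^ j) P (Suc n) = (ann g x ^^ j) Q (Suc n)"
    using Suc.IH[of "Suc n"] Suc.prems by simp
  then have "ann g x ((ann g x ^^ j) P) n = ann g x ((ann g x ^^ j) Q) n"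
    by (rule ann_dep)
  then show ?case by simp
qed

lemma annpow_vanish:
  assumes "g \<in> T_dual" "\<forall>m>N. P m = (\<lambda>_. 0)" "n + j > N"
  shows "(ann g x ^^ j) P n = (\<lambda>_. 0)"
proof -
  have "(ann g x ^^ j) P n = (ann g x ^^ j) (\<lambda>_ _. 0) n"
    by (rule annpow_dep) (use assms in auto)
  then show ?thesis by (simp add: annpow_zero[OF assms(1)])
qed

lemma exp_split:
  assumes "g \<in> T_dual" "\<forall>m>N. P m = (\<lambda>_. 0)"
  shows "exp_ann g x P n ks = P n ks + (\<Sum>j. (ann g x ^^ Suc j) P n ks / of_nat (fact (Suc j)))"
proof -
  have "summable (\<lambda>j. (ann g x ^^ j) P n ks / of_nat (fact j))"
  proof (rule summable_finite[of "{..N}"])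
    fix j assume "j \<notin> {..N}"
    then show "(ann g x ^^ j) P n ks / of_nat (fact j) = 0"
      using annpow_vanish[OF assms, of n j x] by simp
  qed simp
  from suminf_split_head[OF this] show ?thesis unfolding exp_ann_def by simp
qed

lemma inj_core:
  assumes g: "g \<in> T_dual" and P: "\<forall>m>N. P m = (\<lambda>_. 0)" and Q: "\<forall>m>N. Q m = (\<lambda>_. 0)"
    and E: "exp_ann g x P = exp_ann g x Q"
  shows "P = Q"
proof -
  have "\<forall>m. N + 1 - i \<le> m \<longrightarrow> P m = Q m" for i
  proof (induction i)
    case 0 then show ?case using P Q by auto
  next
    case (Suc i)
    show ?case
    proof (intro allI impI)
      fix m assume m: "N + 1 - Suc i \<le> m"
      show "P m = Q m"
      proof (cases "N + 1 - i \<le> m")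
        case True then show ?thesis using Suc.IH by blast
      next
        case False
        have eq: "(ann g x ^^ Suc j) P m = (ann g x ^^ Suc j) Q m" for j
          by (rule annpow_dep) (use Suc.IH False m in auto)
        show ?thesis
        proof
          fix ks
          have "exp_ann g x P m ks = exp_ann g x Q m ks" using E by simp
          then show "P m ks = Q m ks"
            unfolding exp_split[OF g P] exp_split[OF g Q] eq by simp
        qed
      qed
    qed
  qed
  from this[of "N+1"] show ?thesis by auto
qed

lemma Ffin_bound:
  assumes "\<Psi> \<in> Ffin" obtains N where "\<forall>m>N. \<Psi> m = (\<lambda>_. 0)"
proof -
  have "finite {n. \<Psi> n \<noteq> (\<lambda>_. 0)}" using assms by (simp add: Ffin_def)
  then obtain N where "\<forall>n\<in>{n. \<Psi> n \<noteq> (\<lambda>_. 0)}. n \<le> N"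
    using finite_nat_set_iff_bounded_le by blast
  then show ?thesis using that by (meson leD mem_Collect_eq)
qed

theorem proposition4p8:
  fixes g :: "(real^3 \<Rightarrow> complex) \<Rightarrow> complex"
    and \<Psi> \<Phi> :: "real^3 \<Rightarrow> fock"
  assumes "g \<in> T_dual"
    and "L2x_Ffin \<Psi>" and "L2x_Ffin \<Phi>"
    and "AE x in lborel. exp_ann g x (\<Psi> x) = exp_ann g x (\<Phi> x)"
  shows "AE x in lborel. \<Psi> x = \<Phi> x"
proof -
  obtain N1 where A1: "AE x in lborel. \<Psi> x \<in> Ffin \<and> card {n. \<Psi> x n \<noteq> (\<lambda>_. 0)} \<le> N1"
    using assms(2) unfolding L2x_Ffin_def by blast
  obtain N2 where A2: "AE x in lborel. \<Phi> x \<in> Ffin \<and> card {n. \<Phi> x n \<noteq> (\<lambda>_. 0)} \<le> N2"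
    using assms(3) unfolding L2x_Ffin_def by blast
  show ?thesis
    using A1 A2 assms(4)
  proof eventually_elim
    case (elim x)
    obtain M1 where M1: "\<forall>m>M1. \<Psi> x m = (\<lambda>_. 0)" using Ffin_bound elim by blast
    obtain M2 where M2: "\<forall>m>M2. \<Phi> x m = (\<lambda>_. 0)" using Ffin_bound elim by blast
    show ?case
      by (rule inj_core[OF assms(1), of "max M1 M2"]) (use M1 M2 elim in auto)
  qed
qed

end
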